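(* A balanced wiring $F$ is nilpotent if and only if its computation graph $\mathbf G(F)$ is acyclic.
   Context: Terms: first-order terms built from an infinite set of variables, a binary function symbol $\bullet$ written infix, infinitely many constant symbols including a distinguished constant $\star$, and for each $n\ge1$ at least one $n$-ary function symbol. $\mathrm{var}(t)$ is the set of variables of $t$; $t$ is closed if $\mathrm{var}(t)=\emptyset$. The height $h(t)$ is the maximal distance from the root to a node in the tree of $t$; the height of an occurrence of a variable in $t$ is its distance from the root. A flow is a pair of terms written $t\leftarrow u$ with $\mathrm{var}(t)\subseteq\mathrm{var}(u)$, considered up to renaming. A fact is a flow $t\leftarrow\star$ (so $t$ is closed). The product of flows $u\leftarrow v$ and $t\leftarrow w$ (representatives chosen with disjoint variable sets) is defined iff $v$ and $t$ are unifiable, and then equals $u\theta\leftarrow w\theta$ with $\theta$ a most general unifier of $v,t$. A wiring is a finite set of flows, written as a formal sum, with $0$ the empty wiring; product $FG=\{fg: f\in F,g\in G, fg\text{ defined}\}$, $F^n$ the $n$-fold product. For a fact $\mathbf u$, $F\mathbf u$ denotes $F\{\mathbf u\}$ (a set of facts). $F$ is nilpotent if $F^n=0$ for some $n\in\mathbb N$. A flow $t\leftarrow u$ is balanced if for every variable $x$, all occurrences of $x$ in $t$ and in $u$ have the same height; a wiring is balanced if all its flows are. The height of a flow $t\leftarrow u$ is $\max\{h(t),h(u)\}$; the height $h(F)$ of a wiring is the maximal height of its flows. For a balanced wiring $F$, its computation space $\mathrm{Comp}(F)$ is the set of facts $t\leftarrow\star$ with $h(t)\le h(F)$ and $t$ built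 using only symbols occurring in $F$ and the constant $\star$. The computation graph $\mathbf G(F)$ is the directed graph with vertex set $\mathrm{Comp}(F)$ and an edge from $\mathbf u$ to $\mathbf v$ iff $\mathbf v\in F\mathbf u$. *)

theory Defs
  imports Main
begin

datatype sym = Bullet | Star | Const nat | Fn nat nat

fun arity :: "sym \<Rightarrow> nat" where
  "arity Bullet = 2"
| "arity Star = 0"
| "arity (Const i) = 0"
| "arity (Fn n i) = n"

datatype trm = Var nat | Fun sym "trm list"

fun wf_trm :: "trm \<Rightarrow> bool" where
  "wf_trm (Var x) = True"
| "wf_trm (Fun f ts) = (length ts = arity f \<and> (\<forall>t\<in>set ts. wf_trm t))"

fun vars :: "trm \<Rightarrow> nat set" where
  "vars (Var x) = {x}"
| "vars (Fun f ts) = (\<Union>t\<in>set ts. vars t)"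

fun syms :: "trm \<Rightarrow> sym set" where
  "syms (Var x) = {}"
| "syms (Fun f ts) = insert f (\<Union>t\<in>set ts. syms t)"

fun height :: "trm \<Rightarrow> nat" where
  "height (Var x) = 0"
| "height (Fun f ts) = (if ts = [] then 0 else Suc (Max (height ` set ts)))"

fun occ_heights :: "trm \<Rightarrow> nat \<Rightarrow> nat set" where
  "occ_heights (Var y) x = (if x = y then {0} else {})"
| "occ_heights (Fun f ts) x = Suc ` (\<Union>t\<in>set ts. occ_heights t x)"

fun subst :: "(nat \<Rightarrow> trm) \<Rightarrow> trm \<Rightarrow> trm" where
  "subst \<sigma> (Var x) = \<sigma> x"
| "subst \<sigma> (Fun f ts) = Fun f (map (subst \<sigma>) ts)"

definition rename :: "(nat \<Rightarrow> nat) \<Rightarrow> trm \<Rightarrow> trm" where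
  "rename p t = subst (Var \<circ> p) t"

definition is_unifier :: "(nat \<Rightarrow> trm) \<Rightarrow> trm \<Rightarrow> trm \<Rightarrow> bool" where
  "is_unifier \<sigma> s t \<longleftrightarrow> subst \<sigma> s = subst \<sigma> t"

definition is_mgu :: "(nat \<Rightarrow> trm) \<Rightarrow> trm \<Rightarrow> trm \<Rightarrow> bool" where
  "is_mgu \<theta> s t \<longleftrightarrow> is_unifier \<theta> s t \<and>
     (\<forall>\<sigma>. is_unifier \<sigma> s t \<longrightarrow> (\<exists>\<tau>. \<forall>x. \<sigma> x = subst \<tau> (\<theta> x)))"

text \<open>A flow t \<leftarrow> u is represented by the pair (t, u).  Flows are considered up to
renaming; we work with representatives, and products return the set of all
representatives of the result.\<close>

type_synonym flow = "trm \<times> trm"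

definition is_flow :: "flow \<Rightarrow> bool" where
  "is_flow f \<longleftrightarrow> vars (fst f) \<subseteq> vars (snd f) \<and> wf_trm (fst f) \<and> wf_trm (snd f)"

definition star :: trm where
  "star = Fun Star []"

definition fprod :: "flow \<Rightarrow> flow \<Rightarrow> flow set" where
  "fprod f g = {(subst \<theta> (rename p (fst f)), subst \<theta> (rename q (snd g))) | p q \<theta>.
      inj p \<and> inj q \<and>
      (vars (rename p (fst f)) \<union> vars (rename p (snd f))) \<inter>
        (vars (rename q (fst g)) \<union> vars (rename q (snd g))) = {} \<and>
      is_mgu \<theta> (rename p (snd f)) (rename q (fst g))}"

definition wiring :: "flow set \<Rightarrow> bool" where
  "wiring F \<longleftrightarrow> finite F \<and> (\<forall>f\<in>F. is_flow f)"

definition wprod :: "flow set \<Rightarrow> flow set \<Rightarrow> flow set" where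
  "wprod F G = (\<Union>f\<in>F. \<Union>g\<in>G. fprod f g)"

fun wpow :: "flow set \<Rightarrow> nat \<Rightarrow> flow set" where
  "wpow F 0 = {(Var 0, Var 0)}"
| "wpow F (Suc n) = wprod (wpow F n) F"

definition nilpotent :: "flow set \<Rightarrow> bool" where
  "nilpotent F \<longleftrightarrow> (\<exists>n. wpow F n = {})"

definition balanced_flow :: "flow \<Rightarrow> bool" where
  "balanced_flow f \<longleftrightarrow> (\<forall>x. \<forall>a\<in>occ_heights (fst f) x \<union> occ_heights (snd f) x.
      \<forall>b\<in>occ_heights (fst f) x \<union> occ_heights (snd f) x. a = b)"

definition balanced :: "flow set \<Rightarrow> bool" where
  "balanced F \<longleftrightarrow> (\<forall>f\<in>F. balanced_flow f)"

definition flow_height :: "flow \<Rightarrow> nat" where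
  "flow_height f = max (height (fst f)) (height (snd f))"

definition wiring_height :: "flow set \<Rightarrow> nat" where
  "wiring_height F = Max (insert 0 (flow_height ` F))"

definition wiring_syms :: "flow set \<Rightarrow> sym set" where
  "wiring_syms F = (\<Union>f\<in>F. syms (fst f) \<union> syms (snd f))"

definition Comp :: "flow set \<Rightarrow> flow set" where
  "Comp F = {(t, star) | t. vars t = {} \<and> wf_trm t \<and> height t \<le> wiring_height F \<and>
                            syms t \<subseteq> insert Star (wiring_syms F)}"

definition comp_graph :: "flow set \<Rightarrow> (flow \<times> flow) set" where
  "comp_graph F = {(u, v). u \<in> Comp F \<and> v \<in> Comp F \<and> v \<in> wprod F {u}}"

end

theory Submission
  imports Defs
begin

lemma subst_subst: "subst \<sigma> (subst \<tau> t) = subst (\<lambda>x. subst \<sigma> (\<tau> x)) t"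
  by (induction t) auto

lemma subst_Var: "subst Var t = t"
  by (induction t) (auto simp: map_idI)

lemma subst_cong: "(\<And>x. x \<in> vars t \<Longrightarrow> \<sigma> x = \<tau> x) \<Longrightarrow> subst \<sigma> t = subst \<tau> t"
  by (induction t) auto

lemma subst_closed: "vars t = {} \<Longrightarrow> subst \<sigma> t = t"
  using subst_cong[of t \<sigma> Var] subst_Var by auto

lemma vars_subst: "vars (subst \<sigma> t) = (\<Union>x\<in>vars t. vars (\<sigma> x))"
  by (induction t) auto

lemma subst_rename: "subst \<theta> (rename p t) = subst (\<lambda>x. \<theta> (p x)) t"
  unfolding rename_def by (simp add: subst_subst)

lemma vars_rename: "vars (rename p t) = p ` vars t"
  unfolding rename_def by (auto simp: vars_subst)

fun tsize :: "trm \<Rightarrow> nat" where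
  "tsize (Var x) = 1"
| "tsize (Fun f ts) = Suc (sum_list (map tsize ts))"

lemma tsize_pos: "tsize t > 0" by (cases t) auto

lemma tsize_subst_le: "x \<in> vars t \<Longrightarrow> tsize (\<sigma> x) \<le> tsize (subst \<sigma> t)"
proof (induction t)
  case (Var y) then show ?case by auto
next
  case (Fun f ts)
  then obtain t where t: "t \<in> set ts" "x \<in> vars t" by auto
  have "tsize (subst \<sigma> t) \<le> sum_list (map tsize (map (subst \<sigma>) ts))"
    using t(1) by (intro member_le_sum_list) auto
  with Fun.IH[OF t] show ?case by simp
qed

lemma tsize_subst_less: assumes "x \<in> vars t" "t \<noteq> Var x" shows "tsize (\<sigma> x) < tsize (subst \<sigma> t)"
proof (cases t)
  case (Var y) then show ?thesis using assms by auto
next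
  case (Fun f ts)
  with assms obtain t' where t: "t' \<in> set ts" "x \<in> vars t'" by auto
  have "tsize (subst \<sigma> t') \<le> sum_list (map tsize (map (subst \<sigma>) ts))"
    using t(1) by (intro member_le_sum_list) auto
  with tsize_subst_le[OF t(2), of \<sigma>] Fun show ?thesis by simp
qed

definition unifies :: "(nat \<Rightarrow> trm) \<Rightarrow> (trm \<times> trm) list \<Rightarrow> bool" where
  "unifies \<sigma> E \<longleftrightarrow> (\<forall>(s,t)\<in>set E. subst \<sigma> s = subst \<sigma> t)"

definition varsE :: "(trm \<times> trm) list \<Rightarrow> nat set" where
  "varsE E = (\<Union>(s,t)\<in>set E. vars s \<union> vars t)"

definition sizeE :: "(trm \<times> trm) list \<Rightarrow> nat" where
  "sizeE E = sum_list (map (\<lambda>(s,t). tsize s + tsize t) E)"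

lemma finite_vars: "finite (vars t)"
  by (induction t) auto

lemma finite_varsE: "finite (varsE E)"
  unfolding varsE_def by (auto simp: finite_vars)

lemma sizeE_zip: "length ss = length ts \<Longrightarrow>
   sizeE (zip ss ts) = sum_list (map tsize ss) + sum_list (map tsize ts)"
  by (induction ss ts rule: list_induct2) (auto simp: sizeE_def)

lemma varsE_zip: "length ss = length ts \<Longrightarrow>
   varsE (zip ss ts) = (\<Union>t\<in>set ss. vars t) \<union> (\<Union>t\<in>set ts. vars t)"
  by (induction ss ts rule: list_induct2) (auto simp: varsE_def)

lemma unifies_zip: "length ss = length ts \<Longrightarrow>
   unifies \<sigma> (zip ss ts) \<longleftrightarrow> map (subst \<sigma>) ss = map (subst \<sigma>) ts"
  by (induction ss ts rule: list_induct2) (auto simp: unifies_def)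

lemma sizeE_append[simp]: "sizeE (A @ B) = sizeE A + sizeE B"
  by (simp add: sizeE_def)

lemma sizeE_Cons[simp]: "sizeE ((s,t) # E) = tsize s + tsize t + sizeE E"
  by (simp add: sizeE_def)

lemma varsE_Cons[simp]: "varsE ((s,t) # E) = vars s \<union> vars t \<union> varsE E"
  by (simp add: varsE_def)

lemma varsE_append[simp]: "varsE (A @ B) = varsE A \<union> varsE B"
  by (simp add: varsE_def)

lemma unifies_Cons[simp]: "unifies \<sigma> ((s,t) # E) \<longleftrightarrow> subst \<sigma> s = subst \<sigma> t \<and> unifies \<sigma> E"
  by (simp add: unifies_def)

lemma unifies_append[simp]: "unifies \<sigma> (A @ B) \<longleftrightarrow> unifies \<sigma> A \<and> unifies \<sigma> B"
  by (auto simp: unifies_def)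

definition mguE :: "(nat \<Rightarrow> trm) \<Rightarrow> (trm \<times> trm) list \<Rightarrow> bool" where
  "mguE \<theta> E \<longleftrightarrow> unifies \<theta> E \<and> (\<forall>\<rho>. unifies \<rho> E \<longrightarrow> (\<exists>\<tau>. \<forall>x. \<rho> x = subst \<tau> (\<theta> x)))"

lemma elim_step:
  assumes nx: "x \<notin> vars u"
    and eq: "\<And>\<rho>. unifies \<rho> E \<longleftrightarrow> \<rho> x = subst \<rho> u \<and> unifies \<rho> E'"
    and IH: "\<And>\<sigma>. unifies \<sigma> (map (\<lambda>(l,r). (subst (Var(x:=u)) l, subst (Var(x:=u)) r)) E')
                \<Longrightarrow> \<exists>\<theta>. mguE \<theta> (map (\<lambda>(l,r). (subst (Var(x:=u)) l, subst (Var(x:=u)) r)) E')"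
    and un: "unifies \<sigma> E"
  shows "\<exists>\<theta>. mguE \<theta> E"
proof -
  define \<nu> where "\<nu> = Var(x:=u)"
  define E2 where "E2 = map (\<lambda>(l,r). (subst \<nu> l, subst \<nu> r)) E'"
  have key: "unifies \<rho> E2 \<longleftrightarrow> unifies \<rho> E'" if "\<rho> x = subst \<rho> u" for \<rho>
  proof -
    have "subst \<rho> (subst \<nu> l) = subst \<rho> l" for l
      unfolding subst_subst by (rule subst_cong) (auto simp: \<nu>_def that)
    then show ?thesis by (auto simp: E2_def unifies_def)
  qed
  from un eq have "\<sigma> x = subst \<sigma> u" "unifies \<sigma> E'" by auto
  with key have "unifies \<sigma> E2" by auto
  with IH obtain \<theta>2 where m2: "mguE \<theta>2 E2" unfolding E2_def \<nu>_def by blast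
  define \<theta> where "\<theta> = (\<lambda>y. subst \<theta>2 (\<nu> y))"
  have su: "subst \<nu> u = u" using nx by (intro trans[OF subst_cong subst_Var]) (auto simp: \<nu>_def)
  have tx: "\<theta> x = subst \<theta> u"
  proof -
    have "subst \<theta> u = subst \<theta>2 (subst \<nu> u)" by (simp add: \<theta>_def subst_subst)
    also have "\<dots> = subst \<theta>2 u" using su by simp
    finally show ?thesis by (simp add: \<theta>_def \<nu>_def)
  qed
  have E': "unifies \<theta> E'"
  proof -
    have "subst \<theta> l = subst \<theta>2 (subst \<nu> l)" for l by (simp add: \<theta>_def subst_subst)
    with m2 show ?thesis by (auto simp: mguE_def unifies_def E2_def)
  qed
  have "unifies \<theta> E" using eq tx E' by auto
  moreover have "\<exists>\<tau>. \<forall>y. \<rho> y = subst \<tau> (\<theta> y)" if "unifies \<rho> E" for \<rho>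
  proof -
    from that eq have r: "\<rho> x = subst \<rho> u" "unifies \<rho> E'" by auto
    with key have "unifies \<rho> E2" by auto
    with m2 obtain \<tau> where \<tau>: "\<forall>y. \<rho> y = subst \<tau> (\<theta>2 y)" by (auto simp: mguE_def)
    have "\<rho> y = subst \<tau> (\<theta> y)" for y
    proof (cases "y = x")
      case True
      have "subst \<tau> (\<theta> x) = subst \<tau> (subst \<theta>2 u)" by (simp add: \<theta>_def \<nu>_def)
      also have "\<dots> = subst \<rho> u" using \<tau> by (simp add: subst_subst) (metis)
      finally show ?thesis using True r by simp
    next
      case False then show ?thesis using \<tau> by (simp add: \<theta>_def \<nu>_def)
    qed
    then show ?thesis by blast
  qed
  ultimately show ?thesis unfolding mguE_def by blast
qed

lemma unif_exists: "unifies \<sigma> E \<Longrightarrow> \<exists>\<theta>. mguE \<theta> E"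
proof (induction E arbitrary: \<sigma> rule: wf_induct[OF wf_inv_image[OF wf_lex_prod[OF wf_less_than wf_less_than]], of "\<lambda>E. (card (varsE E), sizeE E)"])
  case (1 E)
  note IH = 1(1)
  have IH': "\<exists>\<theta>. mguE \<theta> E'" if "card (varsE E') < card (varsE E) \<or>
      (card (varsE E') = card (varsE E) \<and> sizeE E' < sizeE E)" "unifies \<rho> E'" for E' \<rho>
    using IH[rule_format, of E'] that by simp
  show ?case
  proof (cases E)
    case Nil
    have "mguE Var E" unfolding mguE_def using Nil by (auto simp: unifies_def subst_Var)
    then show ?thesis by blast
  next
    case (Cons p E')
    obtain s t where p: "p = (s,t)" by force
    from 1(2) Cons p have st: "subst \<sigma> s = subst \<sigma> t" and uE': "unifies \<sigma> E'" by auto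
    have elim: "\<exists>\<theta>. mguE \<theta> E" if xu: "x \<notin> vars u" "x \<in> varsE E"
       "varsE E = {x} \<union> vars u \<union> varsE E'"
       "\<And>\<rho>. unifies \<rho> E \<longleftrightarrow> \<rho> x = subst \<rho> u \<and> unifies \<rho> E'" for x u
    proof (rule elim_step[OF xu(1) xu(4) _ 1(2)])
      fix \<sigma>'
      let ?E2 = "map (\<lambda>(l,r). (subst (Var(x:=u)) l, subst (Var(x:=u)) r)) E'"
      assume u2: "unifies \<sigma>' ?E2"
      have vl: "vars (subst (Var(x:=u)) l) \<subseteq> (vars l - {x}) \<union> vars u" for l
        by (auto simp: vars_subst split: if_splits)
      have "varsE ?E2 \<subseteq> (varsE E' - {x}) \<union> vars u"
      proof
        fix y assume "y \<in> varsE ?E2"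
        then obtain l r where lr: "(l,r) \<in> set E'" "y \<in> vars (subst (Var(x:=u)) l) \<or> y \<in> vars (subst (Var(x:=u)) r)"
          unfolding varsE_def by auto
        then have "y \<in> (vars l - {x}) \<union> vars u \<or> y \<in> (vars r - {x}) \<union> vars u" using vl by blast
        moreover have "vars l \<subseteq> varsE E'" "vars r \<subseteq> varsE E'" using lr(1) unfolding varsE_def by auto
        ultimately show "y \<in> (varsE E' - {x}) \<union> vars u" by blast
      qed
      then have "varsE ?E2 \<subseteq> varsE E - {x}" using xu(1,3) by blast
      then have "varsE ?E2 \<subset> varsE E" using xu(2) by blast
      then have "card (varsE ?E2) < card (varsE E)"
        by (rule psubset_card_mono[OF finite_varsE])
      then show "\<exists>\<theta>. mguE \<theta> ?E2" using IH' u2 by blast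
    qed
    show ?thesis
    proof (cases "s = t")
      case True
      have "varsE E' \<subseteq> varsE E" using Cons p by auto
      then have "card (varsE E') \<le> card (varsE E)" by (simp add: card_mono finite_varsE)
      moreover have "sizeE E' < sizeE E" using Cons p tsize_pos[of s] by simp
      ultimately have "card (varsE E') < card (varsE E) \<or>
      (card (varsE E') = card (varsE E) \<and> sizeE E' < sizeE E)" by linarith
      then obtain \<theta> where "mguE \<theta> E'" using IH'[OF _ uE'] by blast
      then have "mguE \<theta> E" using Cons p True by (simp add: mguE_def)
      then show ?thesis by blast
    next
      case False
      show ?thesis
      proof (cases "\<exists>x. s = Var x")
        case True
        then obtain x where sx: "s = Var x" by blast
        have "x \<notin> vars t" using tsize_subst_less[of x t \<sigma>] st sx False by auto
        then show ?thesis
          by (intro elim[of x t]) (auto simp: Cons p sx)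
      next
        case nv: False
        show ?thesis
        proof (cases "\<exists>x. t = Var x")
          case True
          then obtain x where tx: "t = Var x" by blast
          have "x \<notin> vars s" using tsize_subst_less[of x s \<sigma>] st tx False by force
          then show ?thesis
            by (intro elim[of x s]) (auto simp: Cons p tx)
        next
          case nv2: False
          obtain f ss where sf: "s = Fun f ss" using nv by (cases s) auto
          obtain g ts where tg: "t = Fun g ts" using nv2 by (cases t) auto
          from st sf tg have fg: "f = g" and ms: "map (subst \<sigma>) ss = map (subst \<sigma>) ts" by auto
          then have len: "length ss = length ts" by (metis length_map)
          let ?E3 = "zip ss ts @ E'"
          have eqv: "unifies \<rho> E \<longleftrightarrow> unifies \<rho> ?E3" for \<rho>
            using Cons p sf tg fg len by (auto simp: unifies_zip)
          have "varsE ?E3 = varsE E" using Cons p sf tg len by (auto simp: varsE_zip)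
          moreover have "sizeE ?E3 < sizeE E" using Cons p sf tg len by (simp add: sizeE_zip)
          moreover have "unifies \<sigma> ?E3" using eqv 1(2) by blast
          ultimately obtain \<theta> where "mguE \<theta> ?E3" using IH'[of ?E3 \<sigma>] by (simp only:) blast
          then have "mguE \<theta> E" using eqv by (simp add: mguE_def)
          then show ?thesis by blast
        qed
      qed
    qed
  qed
qed

lemma mgu_exists: "is_unifier \<sigma> s t \<Longrightarrow> \<exists>\<theta>. is_mgu \<theta> s t"
  using unif_exists[of \<sigma> "[(s,t)]"] by (auto simp: mguE_def is_mgu_def is_unifier_def unifies_def)


fun tr :: "sym set \<Rightarrow> nat \<Rightarrow> trm \<Rightarrow> trm" where
  "tr S D (Var x) = star"
| "tr S D (Fun f ts) = (if f \<notin> S \<or> length ts \<noteq> arity f then star else if ts = [] then Fun f []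
     else (case D of 0 \<Rightarrow> star | Suc D' \<Rightarrow> Fun f (map (tr S D') ts)))"

lemma height_Fun_le: "height (Fun f ts) \<le> Suc D \<longleftrightarrow> (\<forall>t\<in>set ts. height t \<le> D)"
  by (auto simp: Max_le_iff)

lemma height_Fun_0: "height (Fun f ts) = 0 \<longleftrightarrow> ts = []"
  by auto

lemma tr_props: "vars (tr S D t) = {} \<and> wf_trm (tr S D t) \<and> height (tr S D t) \<le> D \<and> syms (tr S D t) \<subseteq> insert Star S"
proof (induction t arbitrary: D)
  case (Var x) then show ?case by (simp add: star_def)
next
  case (Fun f ts)
  show ?case
  proof (cases "f \<notin> S \<or> length ts \<noteq> arity f \<or> ts = []")
    case True then show ?thesis by (auto simp: star_def)
  next
    case False
    show ?thesis
    proof (cases D)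
      case 0 then show ?thesis using False by (simp add: star_def)
    next
      case (Suc D')
      have h: "height (Fun f (map (tr S D') ts)) \<le> Suc D'"
        unfolding height_Fun_le using Fun.IH by auto
      show ?thesis using False Suc Fun.IH h by auto
    qed
  qed
qed

lemma tr_subst:
  assumes "wf_trm d" "syms d \<subseteq> S" "height d \<le> D" "\<forall>x. \<forall>k\<in>occ_heights d x. k + off = g x" "D + off = H"
  shows "tr S D (subst \<sigma> d) = subst (\<lambda>x. tr S (H - g x) (\<sigma> x)) d"
  using assms
proof (induction d arbitrary: D off)
  case (Var x)
  then have "off = g x" using Var.prems(4) by (metis add_0 insertI1 occ_heights.simps(1))
  with Var.prems(5) show ?case by (metis add_diff_cancel_right' subst.simps(1))
next
  case (Fun f ts)
  show ?case
  proof (cases "ts = []")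
    case True with Fun show ?thesis by simp
  next
    case False
    then obtain D' where D: "D = Suc D'" using Fun(4) by (cases D) auto
    have "tr S D' (subst \<sigma> t) = subst (\<lambda>x. tr S (H - g x) (\<sigma> x)) t" if t: "t \<in> set ts" for t
    proof (rule Fun.IH[OF t, of D' "Suc off"])
      show "wf_trm t" using Fun(2) t by auto
      show "syms t \<subseteq> S" using Fun(3) t by auto
      show "height t \<le> D'" using Fun(4) t D height_Fun_le by blast
      show "\<forall>x. \<forall>k\<in>occ_heights t x. k + Suc off = g x"
      proof (intro allI ballI)
        fix x k assume "k \<in> occ_heights t x"
        then have "Suc k \<in> occ_heights (Fun f ts) x" using t by auto
        then show "k + Suc off = g x" using Fun(5) by fastforce
      qed
      show "D' + Suc off = H" using Fun(6) D by simp
    qed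
    then show ?thesis using Fun(2,3) False D by auto
  qed
qed

lemma fprod_fact:
  assumes "is_flow (c,d)" "\<And>x. vars (\<sigma> x) = {}"
  shows "(subst \<sigma> c, star) \<in> fprod (c,d) (subst \<sigma> d, star)"
proof -
  define \<theta> where "\<theta> = (\<lambda>x. if x \<in> vars d then \<sigma> x else Var x)"
  have cl: "vars (subst \<sigma> d) = {}" using assms(2) by (simp add: vars_subst)
  have ren: "rename id t = t" for t by (simp add: rename_def subst_Var)
  have sd: "subst \<theta> d = subst \<sigma> d" by (rule subst_cong) (simp add: \<theta>_def)
  have sc: "subst \<theta> c = subst \<sigma> c" using assms(1) by (intro subst_cong) (auto simp: \<theta>_def is_flow_def)
  have mgu: "is_mgu \<theta> d (subst \<sigma> d)"
    unfolding is_mgu_def is_unifier_def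
  proof (intro conjI allI impI)
    show "subst \<theta> d = subst \<theta> (subst \<sigma> d)" using sd subst_closed[OF cl] by simp
    fix \<rho> assume "subst \<rho> d = subst \<rho> (subst \<sigma> d)"
    then have r: "subst \<rho> d = subst \<sigma> d" using subst_closed[OF cl] by simp
    have "\<rho> x = \<sigma> x" if "x \<in> vars d" for x
    proof -
      have "vars d \<subseteq> vars d" by simp
      have "\<forall>x\<in>vars t. \<rho> x = \<sigma> x" if "subst \<rho> t = subst \<sigma> t" for t
        using that by (induction t) (auto simp: map_eq_conv)
      then show ?thesis using r that by blast
    qed
    then have "\<rho> x = subst \<rho> (\<theta> x)" for x
      using subst_closed[OF assms(2)] by (simp add: \<theta>_def)
    then show "\<exists>\<tau>. \<forall>x. \<rho> x = subst \<tau> (\<theta> x)" by blast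
  qed
  have "(subst \<theta> (rename id c), subst \<theta> (rename id star)) \<in> fprod (c,d) (subst \<sigma> d, star)"
    unfolding fprod_def
    using mgu cl by (auto simp: ren star_def intro!: exI[of _ id] exI[of _ \<theta>])
  then show ?thesis by (simp add: ren sc star_def)
qed


lemma finite_syms: "finite (syms t)"
  by (induction t) auto

lemma finite_closed:
  assumes S: "finite S"
  shows "finite {t. vars t = {} \<and> wf_trm t \<and> height t \<le> D \<and> syms t \<subseteq> S}"
proof (induction D)
  case 0
  have "{t. vars t = {} \<and> wf_trm t \<and> height t \<le> 0 \<and> syms t \<subseteq> S} \<subseteq> (\<lambda>f. Fun f []) ` S"
  proof
    fix t assume t: "t \<in> {t. vars t = {} \<and> wf_trm t \<and> height t \<le> 0 \<and> syms t \<subseteq> S}"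
    then obtain f ts where "t = Fun f ts" by (cases t) auto
    with t show "t \<in> (\<lambda>f. Fun f []) ` S" by (auto split: if_splits)
  qed
  then show ?case using S finite_subset by blast
next
  case (Suc D)
  let ?T = "{t. vars t = {} \<and> wf_trm t \<and> height t \<le> D \<and> syms t \<subseteq> S}"
  have "{t. vars t = {} \<and> wf_trm t \<and> height t \<le> Suc D \<and> syms t \<subseteq> S} \<subseteq>
        (\<Union>f\<in>S. Fun f ` {ts. set ts \<subseteq> ?T \<and> length ts = arity f})"
  proof
    fix t assume t: "t \<in> {t. vars t = {} \<and> wf_trm t \<and> height t \<le> Suc D \<and> syms t \<subseteq> S}"
    then obtain f ts where ft: "t = Fun f ts" by (cases t) auto
    with t have "set ts \<subseteq> ?T" using height_Fun_le[of f ts D] by auto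
    with t ft show "t \<in> (\<Union>f\<in>S. Fun f ` {ts. set ts \<subseteq> ?T \<and> length ts = arity f})" by auto
  qed
  moreover have "finite (\<Union>f\<in>S. Fun f ` {ts. set ts \<subseteq> ?T \<and> length ts = arity f})"
    using S Suc.IH by (intro finite_UN_I finite_imageI finite_lists_length_eq) auto
  ultimately show ?case using finite_subset by blast
qed

lemma finite_Comp: "wiring F \<Longrightarrow> finite (Comp F)"
proof -
  assume w: "wiring F"
  have fs: "finite (insert Star (wiring_syms F))"
    using w by (auto simp: wiring_def wiring_syms_def finite_syms)
  have "Comp F = (\<lambda>t. (t, star)) ` {t. vars t = {} \<and> wf_trm t \<and> height t \<le> wiring_height F \<and> syms t \<subseteq> insert Star (wiring_syms F)}"
    unfolding Comp_def by auto
  then show ?thesis using finite_closed[OF fs] by simp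
qed

lemma chain:
  "(a,b) \<in> wpow F n \<Longrightarrow> \<exists>t. t 0 = b \<and> (\<forall>i<n. \<exists>c d \<sigma>. (c,d) \<in> F \<and> t (Suc i) = subst \<sigma> c \<and> t i = subst \<sigma> d)"
proof (induction n arbitrary: a b)
  case 0 then show ?case by auto
next
  case (Suc n)
  then obtain a' b' c d where ab': "(a',b') \<in> wpow F n" and cd: "(c,d) \<in> F"
    and ab: "(a,b) \<in> fprod (a',b') (c,d)"
    by (auto simp: wprod_def)
  from ab obtain p q \<theta> where b: "b = subst \<theta> (rename q d)"
    and m: "is_mgu \<theta> (rename p b') (rename q c)"
    unfolding fprod_def by auto
  from m have u: "subst \<theta> (rename p b') = subst \<theta> (rename q c)" by (simp add: is_mgu_def is_unifier_def)
  from Suc.IH[OF ab'] obtain s where s0: "s 0 = b'"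
    and s: "\<forall>i<n. \<exists>c d \<sigma>. (c,d) \<in> F \<and> s (Suc i) = subst \<sigma> c \<and> s i = subst \<sigma> d" by blast
  define t where "t = (\<lambda>i. case i of 0 \<Rightarrow> b | Suc j \<Rightarrow> subst \<theta> (rename p (s j)))"
  have "\<exists>c d \<sigma>. (c,d) \<in> F \<and> t (Suc i) = subst \<sigma> c \<and> t i = subst \<sigma> d" if i: "i < Suc n" for i
  proof (cases i)
    case 0
    have "t (Suc i) = subst (\<lambda>x. \<theta> (q x)) c" using 0 s0 u by (simp add: t_def subst_rename)
    moreover have "t i = subst (\<lambda>x. \<theta> (q x)) d" using 0 b by (simp add: t_def subst_rename)
    ultimately show ?thesis using cd by blast
  next
    case (Suc j)
    with i s obtain c' d' \<sigma> where "(c',d') \<in> F" "s (Suc j) = subst \<sigma> c'" "s j = subst \<sigma> d'" by auto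
    then show ?thesis using Suc
      by (intro exI[of _ c'] exI[of _ d'] exI[of _ "\<lambda>x. subst \<theta> (rename p (\<sigma> x))"])
         (simp add: t_def rename_def subst_subst)
  qed
  moreover have "t 0 = b" by (simp add: t_def)
  ultimately show ?case by blast
qed

lemma path_wpow:
  "(\<forall>i<n. (u i, u (Suc i)) \<in> comp_graph F) \<Longrightarrow> u 0 = (t0, star) \<Longrightarrow> vars t0 = {} \<Longrightarrow>
   \<exists>a b \<sigma>. (a,b) \<in> wpow F n \<and> subst \<sigma> b = t0"
proof (induction n arbitrary: u t0)
  case 0
  then show ?case by (intro exI[of _ "Var 0"] exI[of _ "Var 0"] exI[of _ "\<lambda>_. t0"]) simp
next
  case (Suc n)
  from Suc.prems(1) have e: "(u 0, u 1) \<in> comp_graph F" by auto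
  then obtain t1 where u1: "u 1 = (t1, star)" "vars t1 = {}" by (auto simp: comp_graph_def Comp_def)
  from e Suc.prems(2) u1 obtain c d where cd: "(c,d) \<in> F" and f: "(t1, star) \<in> fprod (c,d) (t0,star)"
    by (auto simp: comp_graph_def wprod_def)
  from f obtain p q \<theta> where t1: "t1 = subst \<theta> (rename p c)" and m: "is_mgu \<theta> (rename p d) (rename q t0)"
    unfolding fprod_def by auto
  define \<rho> where "\<rho> = (\<lambda>x. \<theta> (p x))"
  have rc: "subst \<rho> c = t1" using t1 by (simp add: \<rho>_def subst_rename)
  have "rename q t0 = t0" unfolding rename_def using Suc.prems(3) by (rule subst_closed)
  then have rd: "subst \<rho> d = t0" using m Suc.prems(3)
    by (simp add: \<rho>_def subst_rename[symmetric] is_mgu_def is_unifier_def subst_closed)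
  have "\<forall>i<n. ((\<lambda>i. u (Suc i)) i, (\<lambda>i. u (Suc i)) (Suc i)) \<in> comp_graph F" using Suc.prems(1) by auto
  from Suc.IH[OF this _ u1(2)] u1(1) obtain a' b' \<sigma> where ab': "(a',b') \<in> wpow F n" and sb: "subst \<sigma> b' = t1"
    by auto
  define p' :: "nat \<Rightarrow> nat" where "p' = (\<lambda>x. 2*x)"
  define q' :: "nat \<Rightarrow> nat" where "q' = (\<lambda>x. 2*x+1)"
  define \<tau> where "\<tau> = (\<lambda>y. if even y then \<sigma> (y div 2) else \<rho> (y div 2))"
  have tp: "subst \<tau> (rename p' t) = subst \<sigma> t" for t by (simp add: subst_rename \<tau>_def p'_def)
  have tq: "subst \<tau> (rename q' t) = subst \<rho> t" for t by (simp add: subst_rename \<tau>_def q'_def)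
  have "is_unifier \<tau> (rename p' b') (rename q' c)" unfolding is_unifier_def tp tq using sb rc by simp
  then obtain \<theta>' where m': "is_mgu \<theta>' (rename p' b') (rename q' c)" using mgu_exists by blast
  have inj: "inj p'" "inj q'" by (auto simp: inj_def p'_def q'_def)
  have disj: "(vars (rename p' a') \<union> vars (rename p' b')) \<inter> (vars (rename q' c) \<union> vars (rename q' d)) = {}"
    by (auto simp: vars_rename p'_def q'_def) presburger+
  have mem: "(subst \<theta>' (rename p' a'), subst \<theta>' (rename q' d)) \<in> fprod (a',b') (c,d)"
    unfolding fprod_def using inj disj m' by fastforce
  then have "(subst \<theta>' (rename p' a'), subst \<theta>' (rename q' d)) \<in> wpow F (Suc n)"
    using ab' cd by (auto simp: wprod_def)
  moreover obtain \<tau>'' where "\<forall>x. \<tau> x = subst \<tau>'' (\<theta>' x)"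
    using m' \<open>is_unifier \<tau> _ _\<close> by (auto simp: is_mgu_def)
  then have "subst \<tau>'' (subst \<theta>' (rename q' d)) = t0"
    by (simp add: subst_subst tq[symmetric] rd[symmetric]) (metis subst_cong)
  ultimately show ?case by blast
qed


lemma path_trancl: "(\<forall>k<n. (u k, u (Suc k)) \<in> r) \<Longrightarrow> i < j \<Longrightarrow> j \<le> n \<Longrightarrow> (u i, u j) \<in> r\<^sup>+"
proof (induction j)
  case 0 then show ?case by simp
next
  case (Suc j)
  show ?case
  proof (cases "i = j")
    case True with Suc show ?thesis by auto
  next
    case False
    with Suc have "(u i, u j) \<in> r\<^sup>+" by auto
    moreover have "(u j, u (Suc j)) \<in> r" using Suc by auto
    ultimately show ?thesis by auto
  qed
qed

theorem mainTheorem7: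
  assumes "wiring F" and "balanced F"
  shows "nilpotent F \<longleftrightarrow> acyclic (comp_graph F)"
proof
  assume nil: "nilpotent F"
  show "acyclic (comp_graph F)"
  proof (rule ccontr)
    assume "\<not> acyclic (comp_graph F)"
    then obtain v where "(v,v) \<in> (comp_graph F)\<^sup>+" by (auto simp: acyclic_def)
    then obtain k where k: "k > 0" "(v,v) \<in> comp_graph F ^^ k" by (auto simp: trancl_power)
    have pw: "(v,v) \<in> comp_graph F ^^ (k*m)" for m
    proof (induction m)
      case 0 then show ?case by simp
    next
      case (Suc m)
      have "comp_graph F ^^ (k * Suc m) = comp_graph F ^^ (k*m + k)" by (simp add: add.commute)
      with Suc k show ?case by (auto simp: relpow_add)
    qed
    from nil obtain n where n: "wpow F n = {}" by (auto simp: nilpotent_def)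
    from pw[of n] obtain u where u: "u 0 = v" "\<forall>i<k*n. (u i, u (Suc i)) \<in> comp_graph F"
      by (auto simp: relpow_fun_conv)
    have "n \<le> k*n" using k by simp
    with u have path: "\<forall>i<n. (u i, u (Suc i)) \<in> comp_graph F" using order_less_le_trans by blast
    show False
    proof (cases n)
      case 0 with n show False by simp
    next
      case (Suc n')
      then have "(u 0, u 1) \<in> comp_graph F" using path by auto
      then obtain t0 where "u 0 = (t0, star)" "vars t0 = {}" by (auto simp: comp_graph_def Comp_def)
      from path_wpow[OF path this] n show False by auto
    qed
  qed
next
  assume ac: "acyclic (comp_graph F)"
  show "nilpotent F"
  proof (rule ccontr)
    assume nn: "\<not> nilpotent F"
    define N where "N = card (Comp F)"
    define S where "S = insert Star (wiring_syms F)"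
    define H where "H = wiring_height F"
    from nn obtain a b where "(a,b) \<in> wpow F N" unfolding nilpotent_def by (metis all_not_in_conv surj_pair)
    from chain[OF this] obtain t where
      t: "\<forall>i<N. \<exists>c d \<sigma>. (c,d) \<in> F \<and> t (Suc i) = subst \<sigma> c \<and> t i = subst \<sigma> d" by blast
    define U where "U = (\<lambda>i. (tr S H (t i), star))"
    have SS: "insert Star S = S" by (simp add: S_def)
    have UC: "U i \<in> Comp F" for i
      using tr_props[of S H "t i"] unfolding U_def Comp_def SS by (auto simp: S_def H_def)
    have edge: "(U i, U (Suc i)) \<in> comp_graph F" if i: "i < N" for i
    proof -
      from t i obtain c d \<sigma> where cd: "(c,d) \<in> F" and ts: "t (Suc i) = subst \<sigma> c" "t i = subst \<sigma> d" by blast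
      have fl: "is_flow (c,d)" using assms(1) cd by (auto simp: wiring_def)
      define g where "g = (\<lambda>x. SOME k. k \<in> occ_heights c x \<union> occ_heights d x)"
      have bal: "balanced_flow (c,d)" using assms(2) cd by (auto simp: balanced_def)
      have gk: "k = g x" if "k \<in> occ_heights c x \<union> occ_heights d x" for k x
      proof -
        have "g x \<in> occ_heights c x \<union> occ_heights d x" unfolding g_def using that by (rule someI)
        with that bal show ?thesis unfolding balanced_flow_def by auto
      qed
      have hf: "flow_height (c,d) \<le> H"
        unfolding H_def wiring_height_def using assms(1) cd by (auto simp: wiring_def intro: Max_ge)
      have sy: "syms c \<subseteq> S" "syms d \<subseteq> S" using cd by (auto simp: S_def wiring_syms_def)
      define \<sigma>' where "\<sigma>' = (\<lambda>x. tr S (H - g x) (\<sigma> x))"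
      have trc: "tr S H (subst \<sigma> c) = subst \<sigma>' c" unfolding \<sigma>'_def
        by (rule tr_subst) (use fl sy hf gk in \<open>auto simp: is_flow_def flow_height_def\<close>)
      have trd: "tr S H (subst \<sigma> d) = subst \<sigma>' d" unfolding \<sigma>'_def
        by (rule tr_subst) (use fl sy hf gk in \<open>auto simp: is_flow_def flow_height_def\<close>)
      have cl: "vars (\<sigma>' x) = {}" for x using tr_props unfolding \<sigma>'_def by blast
      have "U (Suc i) \<in> fprod (c,d) (U i)"
        unfolding U_def ts trc trd by (rule fprod_fact[OF fl cl])
      then have "U (Suc i) \<in> wprod F {U i}" using cd by (auto simp: wprod_def)
      then show ?thesis using UC by (simp add: comp_graph_def)
    qed
    have "\<not> inj_on U {0..N}"
    proof
      assume "inj_on U {0..N}"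
      then have "card (U ` {0..N}) = Suc N" by (simp add: card_image)
      moreover have "card (U ` {0..N}) \<le> N"
        unfolding N_def using UC finite_Comp[OF assms(1)] by (intro card_mono) auto
      ultimately show False by simp
    qed
    then obtain i j where ij: "i \<in> {0..N}" "j \<in> {0..N}" "i \<noteq> j" "U i = U j"
      by (auto simp: inj_on_def)
    then have "\<exists>i j. i < j \<and> j \<le> N \<and> U i = U j" by (metis atLeastAtMost_iff linorder_neqE_nat)
    then obtain i j where "i < j" "j \<le> N" "U i = U j" by blast
    with path_trancl[of N U "comp_graph F" i j] edge have "(U i, U i) \<in> (comp_graph F)\<^sup>+" by auto
    with ac show False unfolding acyclic_def by blast
  qed
qed


end
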